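(* Let $R(s,t)=\mathbb{E}[I_n(f_s)I_n(f_t)]$ have finite 2D $\rho$-variation on $[0,1]^2$ for some $\rho\in[1,3/2)$ with $\|R\|^\rho_{\rho\text{-var};[s,t]\times[s,t]}\le|t-s|$ for all $0\le s\le t\le1$. Then for any $\varphi\in\mathcal{H}^{\hat\otimes n}$, the real function $\phi_t=\langle f_t,\varphi\rangle_{\mathcal{H}^{\otimes n}}$ has finite $\rho$-variation on $[0,1]$ and $$\|\phi\|_{\rho\text{-var};[0,1]}\le C\,\|\varphi\|_{\mathcal{H}^{\otimes n}}\sqrt{\|R\|_{\rho\text{-var};[0,1]^2}},$$ where $C$ is a constant not depending on $\varphi$.
   Context: $\mathcal{H}$ is a real separable Hilbert space with an isonormal Gaussian process $W$ on $(\Omega,\mathcal{F},\mathbb{P})$; $I_n$ is the $n$-th multiple Wiener–Itô integral ($n\ge1$ fixed), so $\mathbb{E}[I_n(f)I_n(g)]=n!\langle f,g\rangle_{\mathcal{H}^{\otimes n}}$; $(f_t)_{t\in[0,1]}\subset\mathcal{H}^{\hat\otimes n}$ (symmetric tensors). For $F:[0,1]^2\to\mathbb{R}$, $F([a,b]\times[c,d]):=F(b,d)-F(a,d)-F(b,c)+F(a,c)$ and $\|F\|_{\rho\text{-var};[s,t]\times[u,v]}:=\big(\sup\sum_{i,j}|F([t_i,t_{i+1}]\times[u_j,u_{j+1}])|^\rho\big)^{1/\rho}$ over partitions of $[s,t]$ and $[u,v]$. The one-dimensional $\rho$-variation is $\|\phi\|_{\rho\text{-var};[0,1]}=(\sup\sum_i|\phi_{t_{i+1}}-\phi_{t_i}|^\rho)^{1/\rho}$.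 *)

theory Defs
  imports "HOL-Analysis.Analysis"
begin

definition is_partition :: "real \<Rightarrow> real \<Rightarrow> nat \<Rightarrow> (nat \<Rightarrow> real) \<Rightarrow> bool" where
  "is_partition a b k t \<longleftrightarrow> t 0 = a \<and> t k = b \<and> (\<forall>i<k. t i \<le> t (Suc i))"

definition var1_sums :: "real \<Rightarrow> (real \<Rightarrow> real) \<Rightarrow> real \<Rightarrow> real \<Rightarrow> real set" where
  "var1_sums \<rho> \<phi> a b =
     {(\<Sum>i<k. \<bar>\<phi> (t (Suc i)) - \<phi> (t i)\<bar> powr \<rho>) | k t. is_partition a b k t}"

definition finite_var1 :: "real \<Rightarrow> (real \<Rightarrow> real) \<Rightarrow> real \<Rightarrow> real \<Rightarrow> bool" where
  "finite_var1 \<rho> \<phi> a b \<longleftrightarrow> bdd_above (var1_sums \<rho> \<phi> a b)"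

definition var1 :: "real \<Rightarrow> (real \<Rightarrow> real) \<Rightarrow> real \<Rightarrow> real \<Rightarrow> real" where
  "var1 \<rho> \<phi> a b = (Sup (var1_sums \<rho> \<phi> a b)) powr (1 / \<rho>)"

definition rect_incr :: "(real \<Rightarrow> real \<Rightarrow> real) \<Rightarrow> real \<Rightarrow> real \<Rightarrow> real \<Rightarrow> real \<Rightarrow> real" where
  "rect_incr F a b c d = F b d - F a d - F b c + F a c"

definition var2_sums :: "real \<Rightarrow> (real \<Rightarrow> real \<Rightarrow> real) \<Rightarrow> real \<Rightarrow> real \<Rightarrow> real \<Rightarrow> real \<Rightarrow> real set" where
  "var2_sums \<rho> F a b c d =
     {(\<Sum>i<k. \<Sum>j<l. \<bar>rect_incr F (t i) (t (Suc i)) (u j) (u (Suc j))\<bar> powr \<rho>)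
        | k t l u. is_partition a b k t \<and> is_partition c d l u}"

definition finite_var2 :: "real \<Rightarrow> (real \<Rightarrow> real \<Rightarrow> real) \<Rightarrow> real \<Rightarrow> real \<Rightarrow> real \<Rightarrow> real \<Rightarrow> bool" where
  "finite_var2 \<rho> F a b c d \<longleftrightarrow> bdd_above (var2_sums \<rho> F a b c d)"

definition var2 :: "real \<Rightarrow> (real \<Rightarrow> real \<Rightarrow> real) \<Rightarrow> real \<Rightarrow> real \<Rightarrow> real \<Rightarrow> real \<Rightarrow> real" where
  "var2 \<rho> F a b c d = (Sup (var2_sums \<rho> F a b c d)) powr (1 / \<rho>)"

end

theory Submission
  imports Defs
begin

lemma holder_sum:
  fixes A B :: "'i \<Rightarrow> real"
  assumes I: "finite I" and A: "\<And>i. i \<in> I \<Longrightarrow> 0 \<le> A i"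
    and B: "\<And>i. i \<in> I \<Longrightarrow> 0 \<le> B i" and th: "0 \<le> \<theta>" "\<theta> < 1"
  shows "(\<Sum>i\<in>I. A i powr \<theta> * B i powr (1-\<theta>))
           \<le> (\<Sum>i\<in>I. A i) powr \<theta> * (\<Sum>i\<in>I. B i) powr (1-\<theta>)"
proof -
  define SA where "SA = (\<Sum>i\<in>I. A i)"
  define SB where "SB = (\<Sum>i\<in>I. B i)"
  have SA0: "SA \<ge> 0" unfolding SA_def by (rule sum_nonneg) (use A in auto)
  have SB0: "SB \<ge> 0" unfolding SB_def by (rule sum_nonneg) (use B in auto)
  have rhs0: "0 \<le> SA powr \<theta> * SB powr (1-\<theta>)" by simp
  consider "SA = 0" | "SB = 0" | "SA > 0" "SB > 0" using SA0 SB0 by linarith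
  then show ?thesis
  proof cases
    case 1
    then have "\<forall>i\<in>I. A i = 0" using sum_nonneg_eq_0_iff[OF I] A unfolding SA_def by blast
    then have "(\<Sum>i\<in>I. A i powr \<theta> * B i powr (1-\<theta>)) = 0" by simp
    then show ?thesis using rhs0 SA_def SB_def by simp
  next
    case 2
    then have "\<forall>i\<in>I. B i = 0" using sum_nonneg_eq_0_iff[OF I] B unfolding SB_def by blast
    then have "(\<Sum>i\<in>I. A i powr \<theta> * B i powr (1-\<theta>)) = 0" by simp
    then show ?thesis using rhs0 SA_def SB_def by simp
  next
    case 3
    have trm: "A i powr \<theta> * B i powr (1-\<theta>)
        \<le> SA powr \<theta> * SB powr (1-\<theta>) * (\<theta> * (A i / SA) + (1-\<theta>) * (B i / SB))"
      if i: "i \<in> I" for i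
    proof (cases "A i = 0 \<or> B i = 0")
      case True
      have "A i powr \<theta> * B i powr (1-\<theta>) = 0" using True by auto
      moreover have "0 \<le> \<theta> * (A i / SA) + (1-\<theta>) * (B i / SB)"
        using A[OF i] B[OF i] 3 th by simp
      then have "0 \<le> SA powr \<theta> * SB powr (1-\<theta>) * (\<theta> * (A i / SA) + (1-\<theta>) * (B i / SB))"
        by (rule mult_nonneg_nonneg[OF rhs0])
      ultimately show ?thesis by linarith
    next
      case False
      then have pa: "A i / SA > 0" and pb: "B i / SB > 0" using A[OF i] B[OF i] 3 by auto
      have y: "(A i / SA) powr \<theta> * (B i / SB) powr (1-\<theta>) \<le> \<theta> * (A i / SA) + (1-\<theta>) * (B i / SB)"
        by (rule Youngs_inequality_0) (use th pa pb in auto)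
      have "A i powr \<theta> * B i powr (1-\<theta>) = SA powr \<theta> * SB powr (1-\<theta>) * ((A i / SA) powr \<theta> * (B i / SB) powr (1-\<theta>))"
        using 3 A[OF i] B[OF i] by (simp add: powr_divide)
      also have "\<dots> \<le> SA powr \<theta> * SB powr (1-\<theta>) * (\<theta> * (A i / SA) + (1-\<theta>) * (B i / SB))"
        by (rule mult_left_mono[OF y rhs0])
      finally show ?thesis .
    qed
    have "(\<Sum>i\<in>I. A i powr \<theta> * B i powr (1-\<theta>))
        \<le> (\<Sum>i\<in>I. SA powr \<theta> * SB powr (1-\<theta>) * (\<theta> * (A i / SA) + (1-\<theta>) * (B i / SB)))"
      by (rule sum_mono) (rule trm)
    also have "\<dots> = SA powr \<theta> * SB powr (1-\<theta>) * (\<theta> * (SA / SA) + (1-\<theta>) * (SB / SB))"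
      by (simp add: sum_distrib_left sum.distrib SA_def SB_def sum_divide_distrib[symmetric]
          flip: sum_distrib_left)
    also have "\<dots> = SA powr \<theta> * SB powr (1-\<theta>)" using 3 by simp
    finally show ?thesis unfolding SA_def SB_def .
  qed
qed


theorem mainTheorem2:
  fixes n :: nat and \<rho> :: real
    and f :: "real \<Rightarrow> 'a::{real_inner, complete_space}"
    and R :: "real \<Rightarrow> real \<Rightarrow> real"
  assumes n: "n \<ge> 1"
    and R_def: "\<And>s t. R s t = fact n * inner (f s) (f t)"
    and rho: "1 \<le> \<rho>" "\<rho> < 3 / 2"
    and Rfin: "finite_var2 \<rho> R 0 1 0 1"
    and Rctrl: "\<And>s t. 0 \<le> s \<Longrightarrow> s \<le> t \<Longrightarrow> t \<le> 1 \<Longrightarrow>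
                 (var2 \<rho> R s t s t) powr \<rho> \<le> \<bar>t - s\<bar>"
  shows "\<exists>C. \<forall>\<phi> :: 'a.
           finite_var1 \<rho> (\<lambda>t. inner (f t) \<phi>) 0 1 \<and>
           var1 \<rho> (\<lambda>t. inner (f t) \<phi>) 0 1 \<le> C * norm \<phi> * sqrt (var2 \<rho> R 0 1 0 1)"
proof -
  define V where "V = Sup (var2_sums \<rho> R 0 1 0 1)"
  define \<theta> where "\<theta> = (\<rho> - 1) / \<rho>"
  have rpos: "\<rho> > 0" using rho by simp
  have th0: "0 \<le> \<theta>" and th1: "\<theta> < 1" using rho unfolding \<theta>_def by auto
  have one_th: "1 - \<theta> = 1 / \<rho>" using rpos unfolding \<theta>_def by (simp add: field_simps)
  have rth: "\<rho> * \<theta> = \<rho> - 1" using rpos unfolding \<theta>_def by simp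
  have fpos: "fact n > (0::real)" by simp
  have inner_rect: "\<And>a b c d. rect_incr R a b c d = fact n * inner (f b - f a) (f d - f c)"
    by (simp add: rect_incr_def R_def inner_diff algebra_simps)
  have bdd2: "bdd_above (var2_sums \<rho> R 0 1 0 1)" using Rfin unfolding finite_var2_def .
  have V0: "0 \<le> V"
  proof -
    define t0 :: "nat \<Rightarrow> real" where "t0 = (\<lambda>i. if i = 0 then 0 else 1)"
    have p: "is_partition 0 1 1 t0" unfolding is_partition_def t0_def by simp
    have "(\<Sum>i<1. \<Sum>j<1. \<bar>rect_incr R (t0 i) (t0 (Suc i)) (t0 j) (t0 (Suc j))\<bar> powr \<rho>)
           \<in> var2_sums \<rho> R 0 1 0 1"
      unfolding var2_sums_def using p by blast
    then have "(\<Sum>i<1. \<Sum>j<1. \<bar>rect_incr R (t0 i) (t0 (Suc i)) (t0 j) (t0 (Suc j))\<bar> powr \<rho>) \<le> V"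
      unfolding V_def using bdd2 by (rule cSup_upper)
    moreover have "0 \<le> (\<Sum>i<1. \<Sum>j<1. \<bar>rect_incr R (t0 i) (t0 (Suc i)) (t0 j) (t0 (Suc j))\<bar> powr \<rho>)"
      by (intro sum_nonneg) simp
    ultimately show ?thesis by linarith
  qed
  have var2eq: "var2 \<rho> R 0 1 0 1 = V powr (1/\<rho>)" by (simp add: var2_def V_def)
  show ?thesis
  proof (intro exI allI)
    fix \<phi> :: 'a
    define h where "h = (\<lambda>t. inner (f t) \<phi>)"
    define K where "K = (norm \<phi>)^2 * V powr (1/\<rho>) / fact n"
    have K0: "0 \<le> K" unfolding K_def using V0 by simp
    have key: "S \<le> (sqrt K) powr \<rho>" if S: "S \<in> var1_sums \<rho> h 0 1" for S
    proof -
      obtain k t where S_def: "S = (\<Sum>i<k. \<bar>h (t (Suc i)) - h (t i)\<bar> powr \<rho>)"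
        and part: "is_partition 0 1 k t"
        using S unfolding var1_sums_def by blast
      define d where "d i = h (t (Suc i)) - h (t i)" for i
      define \<beta> where "\<beta> i = sgn (d i) * \<bar>d i\<bar> powr (\<rho> - 1)" for i
      define r where "r i j = rect_incr R (t i) (t (Suc i)) (t j) (t (Suc j))" for i j
      define g where "g = (\<Sum>i<k. \<beta> i *\<^sub>R (f (t (Suc i)) - f (t i)))"
      define T where "T = (\<Sum>i<k. \<Sum>j<k. \<bar>r i j\<bar> powr \<rho>)"
      have "T \<in> var2_sums \<rho> R 0 1 0 1" unfolding var2_sums_def T_def r_def using part by blast
      then have TV: "T \<le> V" unfolding V_def using bdd2 by (rule cSup_upper)
      have T0: "0 \<le> T" unfolding T_def by (intro sum_nonneg) simp
      have S0: "0 \<le> S" unfolding S_def by (intro sum_nonneg) simp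
      have bd: "\<beta> i * d i = \<bar>d i\<bar> powr \<rho>" for i
      proof (cases "d i = 0")
        case True then show ?thesis by (simp add: \<beta>_def)
      next
        case False
        have "\<beta> i * d i = \<bar>d i\<bar> powr (\<rho> - 1) * \<bar>d i\<bar> powr 1"
          using False by (auto simp: \<beta>_def sgn_if)
        also have "\<dots> = \<bar>d i\<bar> powr \<rho>" by (subst powr_add[symmetric]) simp
        finally show ?thesis .
      qed
      have abs_beta: "\<bar>\<beta> i\<bar> = \<bar>d i\<bar> powr (\<rho> - 1)" for i
        by (cases "d i = 0") (auto simp: \<beta>_def abs_mult abs_sgn_eq)
      have S_eq: "S = inner g \<phi>"
      proof -
        have "S = (\<Sum>i<k. \<beta> i * d i)" unfolding S_def d_def[symmetric] by (simp add: bd)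
        also have "\<dots> = inner g \<phi>"
          unfolding g_def by (simp add: inner_sum_left d_def h_def inner_diff_left)
        finally show ?thesis .
      qed
      have S_le: "S \<le> norm g * norm \<phi>" unfolding S_eq by (rule norm_cauchy_schwarz)
      have ng: "(norm g)^2 = (\<Sum>i<k. \<Sum>j<k. \<beta> i * \<beta> j * r i j) / fact n"
      proof -
        have "(norm g)^2 = inner g g" by (simp add: power2_norm_eq_inner)
        also have "\<dots> = (\<Sum>i<k. \<Sum>j<k. \<beta> i * \<beta> j * inner (f (t (Suc i)) - f (t i)) (f (t (Suc j)) - f (t j)))"
          unfolding g_def by (simp add: inner_sum_left inner_sum_right sum_distrib_left mult.assoc inner_commute mult.left_commute)
        also have "\<dots> = (\<Sum>i<k. \<Sum>j<k. \<beta> i * \<beta> j * r i j) / fact n"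
          unfolding r_def inner_rect using fpos by (simp add: sum_divide_distrib mult.assoc)
        finally show ?thesis .
      qed
      have s1: "(\<Sum>i<k. \<Sum>j<k. \<beta> i * \<beta> j * r i j)
          \<le> (\<Sum>i<k. \<Sum>j<k. (\<bar>d i\<bar> * \<bar>d j\<bar>) powr (\<rho> - 1) * \<bar>r i j\<bar>)"
      proof (intro sum_mono)
        fix i j
        have "\<beta> i * \<beta> j * r i j \<le> \<bar>\<beta> i * \<beta> j * r i j\<bar>" by simp
        also have "\<dots> = (\<bar>d i\<bar> * \<bar>d j\<bar>) powr (\<rho> - 1) * \<bar>r i j\<bar>"
          by (simp add: abs_mult abs_beta powr_mult)
        finally show "\<beta> i * \<beta> j * r i j \<le> (\<bar>d i\<bar> * \<bar>d j\<bar>) powr (\<rho> - 1) * \<bar>r i j\<bar>" .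
      qed
      have s2: "(\<Sum>i<k. \<Sum>j<k. (\<bar>d i\<bar> * \<bar>d j\<bar>) powr (\<rho> - 1) * \<bar>r i j\<bar>)
          \<le> (S^2) powr \<theta> * T powr (1/\<rho>)"
      proof -
        define I where "I = {..<k} \<times> {..<k}"
        define A where "A = (\<lambda>(i,j). (\<bar>d i\<bar> * \<bar>d j\<bar>) powr \<rho>)"
        define B where "B = (\<lambda>(i,j). \<bar>r i j\<bar> powr \<rho>)"
        have H: "(\<Sum>p\<in>I. A p powr \<theta> * B p powr (1-\<theta>)) \<le> (\<Sum>p\<in>I. A p) powr \<theta> * (\<Sum>p\<in>I. B p) powr (1-\<theta>)"
          by (rule holder_sum) (auto simp: I_def A_def B_def th0 th1)
        have e1: "A (i,j) powr \<theta> * B (i,j) powr (1-\<theta>) = (\<bar>d i\<bar> * \<bar>d j\<bar>) powr (\<rho> - 1) * \<bar>r i j\<bar>" for i j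
          using rpos by (simp add: A_def B_def powr_powr rth one_th)
        have e2: "(\<Sum>p\<in>I. A p) = S^2"
          by (simp add: I_def A_def S_def d_def[symmetric] sum.cartesian_product[symmetric]
              powr_mult power2_eq_square sum_product)
        have e3: "(\<Sum>p\<in>I. B p) = T"
          by (simp add: I_def B_def T_def sum.cartesian_product[symmetric])
        have "(\<Sum>i<k. \<Sum>j<k. (\<bar>d i\<bar> * \<bar>d j\<bar>) powr (\<rho> - 1) * \<bar>r i j\<bar>)
            = (\<Sum>p\<in>I. case p of (i,j) \<Rightarrow> (\<bar>d i\<bar> * \<bar>d j\<bar>) powr (\<rho> - 1) * \<bar>r i j\<bar>)"
          by (simp add: I_def sum.cartesian_product)
        also have "\<dots> = (\<Sum>p\<in>I. A p powr \<theta> * B p powr (1-\<theta>))"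
        proof (rule sum.cong[OF refl])
          fix p :: "nat \<times> nat"
          show "(case p of (i,j) \<Rightarrow> (\<bar>d i\<bar> * \<bar>d j\<bar>) powr (\<rho> - 1) * \<bar>r i j\<bar>) = A p powr \<theta> * B p powr (1-\<theta>)"
            by (cases p) (simp only: e1 prod.case)
        qed
        also have "\<dots> \<le> (\<Sum>p\<in>I. A p) powr \<theta> * (\<Sum>p\<in>I. B p) powr (1-\<theta>)" by (rule H)
        also have "\<dots> = (S^2) powr \<theta> * T powr (1/\<rho>)" by (simp only: e2 e3 one_th)
        finally show ?thesis .
      qed
      have s3: "(S^2) powr \<theta> * T powr (1/\<rho>) \<le> (S^2) powr \<theta> * V powr (1/\<rho>)"
        by (intro mult_left_mono powr_mono2) (use T0 TV rpos in auto)
      have "S^2 \<le> (norm g * norm \<phi>)^2"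
        by (rule power_mono[OF S_le S0])
      also have "\<dots> = (norm g)^2 * (norm \<phi>)^2" by (simp add: power_mult_distrib)
      also have "\<dots> \<le> (S^2) powr \<theta> * V powr (1/\<rho>) / fact n * (norm \<phi>)^2"
        unfolding ng using s1 s2 s3 fpos by (intro mult_right_mono divide_right_mono) auto
      also have "\<dots> = (S^2) powr \<theta> * K" unfolding K_def by simp
      finally have main: "S^2 \<le> (S^2) powr \<theta> * K" .
      show ?thesis
      proof (cases "S = 0")
        case True then show ?thesis by simp
      next
        case False
        then have Sp: "S > 0" using S0 by simp
        have "S^2 = (S^2) powr \<theta> * (S^2) powr (1/\<rho>)"
          using Sp by (simp add: powr_add[symmetric] one_th[symmetric])
        with main have "(S^2) powr \<theta> * (S^2) powr (1/\<rho>) \<le> (S^2) powr \<theta> * K" by simp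
        then have "(S^2) powr (1/\<rho>) \<le> K" using Sp by simp
        then have "((S^2) powr (1/\<rho>)) powr (\<rho>/2) \<le> K powr (\<rho>/2)"
          by (intro powr_mono2) (use rpos in auto)
        moreover have "((S^2) powr (1/\<rho>)) powr (\<rho>/2) = S"
        proof -
          have "((S^2) powr (1/\<rho>)) powr (\<rho>/2) = (S^2) powr (1/2)"
            using rpos by (simp add: powr_powr)
          also have "\<dots> = S" using Sp by (simp add: powr_half_sqrt)
          finally show ?thesis .
        qed
        moreover have "K powr (\<rho>/2) = (sqrt K) powr \<rho>"
        proof -
          have "(sqrt K) powr \<rho> = (K powr (1/2)) powr \<rho>" using K0 by (simp add: powr_half_sqrt)
          also have "\<dots> = K powr (\<rho>/2)" by (simp add: powr_powr)
          finally show ?thesis by simp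
        qed
        ultimately show ?thesis by simp
      qed
    qed
    have bdd1: "bdd_above (var1_sums \<rho> h 0 1)" using key by (auto simp: bdd_above_def)
    have ne: "var1_sums \<rho> h 0 1 \<noteq> {}"
    proof -
      define t0 :: "nat \<Rightarrow> real" where "t0 = (\<lambda>i. if i = 0 then 0 else 1)"
      have p: "is_partition 0 1 1 t0" unfolding is_partition_def t0_def by simp
      then show ?thesis unfolding var1_sums_def by blast
    qed
    have Sup0: "0 \<le> Sup (var1_sums \<rho> h 0 1)"
    proof -
      obtain S where S: "S \<in> var1_sums \<rho> h 0 1" using ne by blast
      then have "S \<le> Sup (var1_sums \<rho> h 0 1)" using bdd1 by (rule cSup_upper)
      moreover have "0 \<le> S" using S unfolding var1_sums_def by (auto intro!: sum_nonneg)
      ultimately show ?thesis by linarith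
    qed
    have SupK: "Sup (var1_sums \<rho> h 0 1) \<le> (sqrt K) powr \<rho>"
      using ne key by (rule cSup_least)
    have "var1 \<rho> h 0 1 \<le> ((sqrt K) powr \<rho>) powr (1/\<rho>)"
      unfolding var1_def by (rule powr_mono2) (use rpos Sup0 SupK in auto)
    also have "\<dots> = sqrt K" using rpos K0 by (simp add: powr_powr)
    also have "\<dots> = (1 / sqrt (fact n)) * norm \<phi> * sqrt (var2 \<rho> R 0 1 0 1)"
      unfolding K_def var2eq by (simp add: real_sqrt_mult real_sqrt_divide)
    finally show "finite_var1 \<rho> (\<lambda>t. inner (f t) \<phi>) 0 1 \<and>
           var1 \<rho> (\<lambda>t. inner (f t) \<phi>) 0 1 \<le> (1 / sqrt (fact n)) * norm \<phi> * sqrt (var2 \<rho> R 0 1 0 1)"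
      using bdd1 unfolding finite_var1_def h_def by simp
  qed
qed

end
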